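(* Consider the energy consumption game $\mathcal{G}^{\mathrm{DP}}_\alpha$ with daily proportional billing described in the context, for a fixed $\alpha\in[0,1]$. Then $\mathcal{G}^{\mathrm{DP}}_\alpha$ is a weighted potential game with potential $$W^{\mathrm{DP}}_\alpha(\boldsymbol{\ell})=(1-\alpha)\sum_{h\in\mathcal{H}}C_h(\ell^h)-\alpha\sum_{n\in\mathcal{N}}\frac{E}{E_n}\,u_n(\boldsymbol{\ell}_n),$$ i.e. there exist positive weights $(w_n)_{n\in\mathcal N}$ such that for every $n$, every $\boldsymbol{\ell}_{-n}\in\prod_{m\neq n}\mathcal{L}_m$ and every $\boldsymbol{\ell}_n,\boldsymbol{\ell}_n'\in\mathcal{L}_n$, $$f_n^\alpha(\boldsymbol{\ell}_n',\boldsymbol{\ell}_{-n})-f_n^\alpha(\boldsymbol{\ell}_n,\boldsymbol{\ell}_{-n})=w_n\big(W^{\mathrm{DP}}_\alpha(\boldsymbol{\ell}_n',\boldsymbol{\ell}_{-n})-W^{\mathrm{DP}}_\alpha(\boldsymbol{\ell}_n,\boldsymbol{\ell}_{-n})\big).$$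
   Context: There is a finite set of users $\mathcal{N}=\{1,\dots,N\}$ and a finite set of time periods $\mathcal{H}$. Each user $n$ chooses a load profile $\boldsymbol{\ell}_n=(\ell_n^h)_{h\in\mathcal{H}}\in\mathbb{R}^{\mathcal H}$ in the feasible set $\mathcal{L}_n=\{\boldsymbol{\ell}_n:\sum_{h}\ell_n^h=E_n,\ \underline{\ell}_n^h\le \ell_n^h\le\overline{\ell}_n^h\ \forall h\}$, where $E_n>0$ and the bounds $\underline{\ell}_n^h\le\overline{\ell}_n^h$ are given; $\mathcal L=\mathcal L_1\times\dots\times\mathcal L_N$, $\boldsymbol{\ell}_{-n}=(\boldsymbol{\ell}_m)_{m\ne n}$. Write $\ell^h=\sum_n\ell_n^h$ and $E=\sum_n E_n$. For each $h$, $C_h:\mathbb{R}\to\mathbb{R}$ is a given cost function. Each user has a preferred profile $\hat{\boldsymbol{\ell}}_n=(\hat\ell_n^h)_h$, a weight $\omega_n>0$ and utility $u_n(\boldsymbol{\ell}_n)=-\omega_n\sum_h(\ell_n^h-\hat\ell_n^h)^2$. The daily proportional (DP) bill of user $n$ is $b_n^{\mathrm{DP}}(\boldsymbol{\ell})=\frac{E_n}{E}\sum_{h}C_h(\ell^h)$, and user $n$'s cost is $f_n^\alpha(\boldsymbol{\ell}_n,\boldsymbol{\ell}_{-n})=(1-\alpha)b_n^{\mathrm{DP}}(\boldsymbol{\ell})-\alpha u_n(\boldsymbol{\ell}_n)$, which user $n$ minimizes over $\mathcal L_n$. The game $\mathcal{G}^{\mathrm{DP}}_\alpha$ has players $\mathcal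 N$, strategy sets $\mathcal L_n$ and costs $f_n^\alpha$. *)

theory Defs
  imports "HOL-Analysis.Analysis"
begin

text \<open>Users range over a finite set NN, periods over a finite set HH.
  A load profile of all users is a function ell :: 'n => 'h => real,
  ell n h being the load of user n in period h.\<close>

definition feasible :: "'h set \<Rightarrow> real \<Rightarrow> ('h \<Rightarrow> real) \<Rightarrow> ('h \<Rightarrow> real) \<Rightarrow> ('h \<Rightarrow> real) set" where
  "feasible HH En lo hi = {x. (\<Sum>h\<in>HH. x h) = En \<and> (\<forall>h\<in>HH. lo h \<le> x h \<and> x h \<le> hi h)}"

definition total_load :: "'n set \<Rightarrow> ('n \<Rightarrow> 'h \<Rightarrow> real) \<Rightarrow> 'h \<Rightarrow> real" where
  "total_load NN ell h = (\<Sum>n\<in>NN. ell n h)"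

definition utility :: "'h set \<Rightarrow> real \<Rightarrow> ('h \<Rightarrow> real) \<Rightarrow> ('h \<Rightarrow> real) \<Rightarrow> real" where
  "utility HH om pref x = - om * (\<Sum>h\<in>HH. (x h - pref h)^2)"

definition bill_DP :: "'n set \<Rightarrow> 'h set \<Rightarrow> ('n \<Rightarrow> real) \<Rightarrow> ('h \<Rightarrow> real \<Rightarrow> real)
    \<Rightarrow> 'n \<Rightarrow> ('n \<Rightarrow> 'h \<Rightarrow> real) \<Rightarrow> real" where
  "bill_DP NN HH E C n ell =
     E n / (\<Sum>m\<in>NN. E m) * (\<Sum>h\<in>HH. C h (total_load NN ell h))"

definition cost_DP :: "real \<Rightarrow> 'n set \<Rightarrow> 'h set \<Rightarrow> ('n \<Rightarrow> real) \<Rightarrow> ('h \<Rightarrow> real \<Rightarrow> real)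
    \<Rightarrow> ('n \<Rightarrow> real) \<Rightarrow> ('n \<Rightarrow> 'h \<Rightarrow> real) \<Rightarrow> 'n \<Rightarrow> ('n \<Rightarrow> 'h \<Rightarrow> real) \<Rightarrow> real" where
  "cost_DP \<alpha> NN HH E C om pref n ell =
     (1 - \<alpha>) * bill_DP NN HH E C n ell - \<alpha> * utility HH (om n) (pref n) (ell n)"

definition potential_DP :: "real \<Rightarrow> 'n set \<Rightarrow> 'h set \<Rightarrow> ('n \<Rightarrow> real) \<Rightarrow> ('h \<Rightarrow> real \<Rightarrow> real)
    \<Rightarrow> ('n \<Rightarrow> real) \<Rightarrow> ('n \<Rightarrow> 'h \<Rightarrow> real) \<Rightarrow> ('n \<Rightarrow> 'h \<Rightarrow> real) \<Rightarrow> real" where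
  "potential_DP \<alpha> NN HH E C om pref ell =
     (1 - \<alpha>) * (\<Sum>h\<in>HH. C h (total_load NN ell h))
     - \<alpha> * (\<Sum>n\<in>NN. (\<Sum>m\<in>NN. E m) / E n * utility HH (om n) (pref n) (ell n))"

end

theory Submission
  imports Defs
begin

theorem theorem1:
  fixes NN :: "'n set" and HH :: "'h set"
    and E :: "'n \<Rightarrow> real" and lo hi :: "'n \<Rightarrow> 'h \<Rightarrow> real"
    and C :: "'h \<Rightarrow> real \<Rightarrow> real" and om :: "'n \<Rightarrow> real"
    and pref :: "'n \<Rightarrow> 'h \<Rightarrow> real" and \<alpha> :: real
  assumes "finite NN" and "finite HH"
    and "\<forall>n\<in>NN. E n > 0"
    and "\<forall>n\<in>NN. \<forall>h\<in>HH. lo n h \<le> hi n h"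
    and "\<forall>n\<in>NN. om n > 0"
    and "0 \<le> \<alpha>" and "\<alpha> \<le> 1"
  shows "\<exists>w :: 'n \<Rightarrow> real. (\<forall>n\<in>NN. w n > 0) \<and>
    (\<forall>n\<in>NN. \<forall>ell. (\<forall>m\<in>NN. ell m \<in> feasible HH (E m) (lo m) (hi m)) \<longrightarrow>
      (\<forall>x \<in> feasible HH (E n) (lo n) (hi n).
         cost_DP \<alpha> NN HH E C om pref n (ell(n := x)) - cost_DP \<alpha> NN HH E C om pref n ell
         = w n * (potential_DP \<alpha> NN HH E C om pref (ell(n := x))
                  - potential_DP \<alpha> NN HH E C om pref ell)))"
proof -
  let ?S = "\<Sum>m\<in>NN. E m"
  have Spos: "NN \<noteq> {} \<Longrightarrow> ?S > 0" using assms(1,3) by (simp add: sum_pos)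
  show ?thesis
  proof (intro exI[of _ "\<lambda>n. E n / ?S"] conjI ballI allI impI)
    fix n assume n: "n \<in> NN"
    then have S: "?S > 0" using Spos by auto
    show "E n / ?S > 0" using S n assms(3) by simp
    fix ell x
    let ?U = "\<lambda>g m. ?S / E m * utility HH (om m) (pref m) (g m)"
    have rem: "(\<Sum>m\<in>NN. ?U g m) = ?U g n + (\<Sum>m\<in>NN-{n}. ?U g m)" for g
      by (rule sum.remove[OF assms(1) n])
    have oth: "(\<Sum>m\<in>NN-{n}. ?U (ell(n:=x)) m) = (\<Sum>m\<in>NN-{n}. ?U ell m)"
      by (rule sum.cong) auto
    have En: "E n > 0" using n assms(3) by simp
    define A where "A = (\<Sum>h\<in>HH. C h (total_load NN (ell(n:=x)) h))"
    define B where "B = (\<Sum>h\<in>HH. C h (total_load NN ell h))"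
    define u1 where "u1 = utility HH (om n) (pref n) x"
    define u0 where "u0 = utility HH (om n) (pref n) (ell n)"
    have P: "potential_DP \<alpha> NN HH E C om pref (ell(n := x)) - potential_DP \<alpha> NN HH E C om pref ell
       = (1-\<alpha>)*(A - B) - \<alpha> * (?S / E n) * (u1 - u0)"
      unfolding potential_DP_def A_def B_def u1_def u0_def
      using rem[of "ell(n:=x)"] rem[of ell] oth by (simp add: algebra_simps)
    have Cd: "cost_DP \<alpha> NN HH E C om pref n (ell(n := x)) - cost_DP \<alpha> NN HH E C om pref n ell
       = (1-\<alpha>)*(E n / ?S)*(A - B) - \<alpha> * (u1 - u0)"
      unfolding cost_DP_def bill_DP_def A_def B_def u1_def u0_def by (simp add: algebra_simps)
    show "cost_DP \<alpha> NN HH E C om pref n (ell(n := x)) - cost_DP \<alpha> NN HH E C om pref n ell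
         = E n / ?S * (potential_DP \<alpha> NN HH E C om pref (ell(n := x))
                  - potential_DP \<alpha> NN HH E C om pref ell)"
      unfolding P Cd using S En by (simp add: field_simps)
  qed
qed

end
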